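(* In the MemSinks setting described in the context, suppose the model is trained from zero initialization for $N$ total steps, during which the repeated example $(\mathbf{s}^{\mathrm{mem}},\mathbf{e}^{\mathrm{mem}})$ is observed $k$ times and non-repeated examples are observed $N-k$ times, and suppose the memorization activations of $\mathbf{s}^{\mathrm{mem}}$ overlap (have nonzero inner product) with those of at most $p(N-k)$ of the non-repeated steps. Then at the end of training: (1) $(\mathbf{e}^{\mathrm{mem}})^\top f^{(N)}_{\mathrm{shared\text{-}only}}(\mathbf{s}^{\mathrm{mem}})\le \gamma k(1-c_{\min})-\gamma(N-k)\,\epsilon_{\mathrm{shared}}\,c_{\min}$; (2) $(\mathbf{e}^{\mathrm{mem}})^\top f^{(N)}_{\mathrm{mem\text{-}only}}(\mathbf{s}^{\mathrm{mem}})\ge \gamma k(1-c_{\max})-\gamma(N-k)\,p\,\epsilon_{\mathrm{mem}}\,c_{\max}$.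
   Context: Model: $f(\mathbf{z})=\mathbf{W}_{\mathrm{proj}}\mathbf{z}\in\mathbb{R}^V$ with fixed hidden activations $\mathbf{z}(\mathbf{s})=[\mathbf{z}(\mathbf{s})_{\mathrm{shared}};\mathbf{z}(\mathbf{s})_{\mathrm{mem}}]$ split into shared (generalization) neurons and memorization-sink neurons, and $\mathbf{W}_{\mathrm{proj}}=[\mathbf{W}^{\mathrm{shared}}_{\mathrm{proj}}\ \mathbf{W}^{\mathrm{mem}}_{\mathrm{proj}}]$ correspondingly. In MemSinks, each sequence activates a sequence-specific (deterministic, consistent across repetitions) subset of memorization neurons and the rest are masked to zero; $\mathbf{z}(\mathbf{s})_{\mathrm{mem}}$ denotes the masked memorization activation. $f_{\mathrm{shared\text{-}only}}(\mathbf{s})=\mathbf{W}^{\mathrm{shared}}_{\mathrm{proj}}\mathbf{z}(\mathbf{s})_{\mathrm{shared}}$ (memorization neurons dropped out) and $f_{\mathrm{mem\text{-}only}}(\mathbf{s})=\mathbf{W}^{\mathrm{mem}}_{\mathrm{proj}}\mathbf{z}(\mathbf{s})_{\mathrm{mem}}$ (shared neurons dropped out); $f^{(N)}$ denotes parameters after $N$ steps. Training: batch size 1, cross-entropy loss with softmax $\sigma$ applied to the full forward pass $f(\mathbf{z})$, learning rate $\gamma>0$; an update on $(\mathbf{z},\mathbf{e})$ is $\mathbf{W}^{\mathrm{shared}}_{\mathrm{proj}}\leftarrow\mathbf{W}^{\mathrm{shared}}_{\mathrm{proj}}+\gamma(\mathbf{e}-\sigma(f(\mathbf{z})))\mathbf{z}_{\mathrm{shared}}^\top$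 and $\mathbf{W}^{\mathrm{mem}}_{\mathrm{proj}}\leftarrow\mathbf{W}^{\mathrm{mem}}_{\mathrm{proj}}+\gamma(\mathbf{e}-\sigma(f(\mathbf{z})))\mathbf{z}_{\mathrm{mem}}^\top$. Targets are one-hot vectors in $\mathbb{R}^V$, and every non-repeated example has target different from $\mathbf{e}^{\mathrm{mem}}$. Assumptions: $\|\mathbf{z}(\mathbf{s}^{\mathrm{mem}})_{\mathrm{shared}}\|_2=\|\mathbf{z}(\mathbf{s}^{\mathrm{mem}})_{\mathrm{mem}}\|_2=1$; throughout training the logits of every forward pass used in an update satisfy $\|f(\mathbf{z})\|_\infty\le C_{\mathrm{proj}}/2$; for every non-repeated example $\mathbf{s}^{(j)}$, $\mathbf{z}(\mathbf{s}^{\mathrm{mem}})_{\mathrm{shared}}^\top\mathbf{z}(\mathbf{s}^{(j)})_{\mathrm{shared}}\ge\epsilon_{\mathrm{shared}}\ge0$ and $0\le\mathbf{z}(\mathbf{s}^{\mathrm{mem}})_{\mathrm{mem}}^\top\mathbf{z}(\mathbf{s}^{(j)})_{\mathrm{mem}}\le\epsilon_{\mathrm{mem}}$. Constants: $c_{\min}=\exp(-C_{\mathrm{proj}})/V$ and $c_{\max}=\exp(C_{\mathrm{proj}})/(V-1)$, with $V\ge2$. *)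

theory Defs
  imports Complex_Main "HOL-Library.Cardinality"
begin

text \<open>Vectors are functions on finite index types: vocabulary 'v, shared neurons 'h,
memorization neurons 'm. Weight matrices are 'v => 'h => real (rows indexed by vocabulary).\<close>

definition softmax :: "('v::finite \<Rightarrow> real) \<Rightarrow> 'v \<Rightarrow> real" where
  "softmax x v = exp (x v) / (\<Sum>u\<in>UNIV. exp (x u))"

definition onehot :: "'v \<Rightarrow> 'v \<Rightarrow> real" where
  "onehot e v = (if v = e then 1 else 0)"

definition dotp :: "('h::finite \<Rightarrow> real) \<Rightarrow> ('h \<Rightarrow> real) \<Rightarrow> real" where
  "dotp z w = (\<Sum>h\<in>UNIV. z h * w h)"

definition matvec :: "('v \<Rightarrow> 'h::finite \<Rightarrow> real) \<Rightarrow> ('h \<Rightarrow> real) \<Rightarrow> 'v \<Rightarrow> real" where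
  "matvec W z v = (\<Sum>h\<in>UNIV. W v h * z h)"

definition fwd :: "('v \<Rightarrow> 'h::finite \<Rightarrow> real) \<Rightarrow> ('v \<Rightarrow> 'm::finite \<Rightarrow> real)
    \<Rightarrow> ('h \<Rightarrow> real) \<Rightarrow> ('m \<Rightarrow> real) \<Rightarrow> 'v \<Rightarrow> real" where
  "fwd Ws Wm zs zm v = matvec Ws zs v + matvec Wm zm v"

text \<open>Parameters (W_shared, W_mem) after t SGD steps (batch size 1, cross-entropy, lr gamma),
  starting from zero, where step t uses shared activation zs t, masked memorization
  activation zm t and one-hot target e t.\<close>
primrec train :: "real \<Rightarrow> (nat \<Rightarrow> 'h::finite \<Rightarrow> real) \<Rightarrow> (nat \<Rightarrow> 'm::finite \<Rightarrow> real)
    \<Rightarrow> (nat \<Rightarrow> 'v::finite) \<Rightarrow> nat \<Rightarrow> ('v \<Rightarrow> 'h \<Rightarrow> real) \<times> ('v \<Rightarrow> 'm \<Rightarrow> real)" where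
  "train \<gamma> zs zm e 0 = ((\<lambda>v h. 0), (\<lambda>v m. 0))"
| "train \<gamma> zs zm e (Suc t) =
     (let Ws = fst (train \<gamma> zs zm e t); Wm = snd (train \<gamma> zs zm e t);
          g = (\<lambda>v. onehot (e t) v - softmax (fwd Ws Wm (zs t) (zm t)) v)
      in ((\<lambda>v h. Ws v h + \<gamma> * g v * zs t h), (\<lambda>v m. Wm v m + \<gamma> * g v * zm t m)))"

end

theory Submission
  imports Defs
begin

lemma softmax_lower:
  fixes x :: "'v::finite \<Rightarrow> real"
  assumes b: "\<And>u. \<bar>x u\<bar> \<le> C / 2"
  shows "exp (- C) / CARD('v) \<le> softmax x v"
proof -
  have den: "(\<Sum>u\<in>UNIV. exp (x u)) \<le> (\<Sum>u\<in>(UNIV::'v set). exp (C/2))"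
  proof (rule sum_mono)
    fix u show "exp (x u) \<le> exp (C/2)" using b[of u] by (simp add: abs_le_iff)
  qed
  have dpos: "(\<Sum>u\<in>(UNIV::'v set). exp (x u)) > 0"
    by (simp add: sum_pos)
  have num: "exp (- C/2) \<le> exp (x v)" using b[of v] by (auto simp: abs_le_iff)
  have "exp (- C) / CARD('v) = exp (-C/2) / (CARD('v) * exp (C/2))"
    by (simp add: exp_add[symmetric] field_simps)
  also have "\<dots> \<le> exp (x v) / (\<Sum>u\<in>UNIV. exp (x u))"
    using den dpos num by (intro frac_le) auto
  finally show ?thesis by (simp add: softmax_def)
qed

lemma softmax_upper:
  fixes x :: "'v::finite \<Rightarrow> real"
  assumes b: "\<And>u. \<bar>x u\<bar> \<le> C / 2" and V2: "CARD('v) \<ge> 2"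
  shows "softmax x v \<le> exp C / (CARD('v) - 1)"
proof -
  have "(\<Sum>u\<in>(UNIV - {v}). exp (-C/2)) \<le> (\<Sum>u\<in>(UNIV - {v}). exp (x u))"
  proof (rule sum_mono)
    fix u show "exp (-C/2) \<le> exp (x u)" using b[of u] by (simp add: abs_le_iff)
  qed
  also have "\<dots> \<le> (\<Sum>u\<in>UNIV. exp (x u))"
    by (rule sum_mono2) auto
  finally have den: "(CARD('v) - 1) * exp (-C/2) \<le> (\<Sum>u\<in>UNIV. exp (x u))"
    by (simp add: card_Diff_singleton of_nat_diff)
  have cpos: "(CARD('v) - 1 :: real) > 0" using V2 by simp
  have num: "exp (x v) \<le> exp (C/2)" using b[of v] by (auto simp: abs_le_iff)
  have "exp (x v) / (\<Sum>u\<in>UNIV. exp (x u)) \<le> exp (C/2) / ((CARD('v) - 1) * exp (-C/2))"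
    using den num cpos by (intro frac_le) auto
  also have "\<dots> = exp C / (CARD('v) - 1)"
    by (simp add: exp_minus field_simps exp_add[symmetric])
  finally show ?thesis by (simp add: softmax_def)
qed

definition gr :: "real \<Rightarrow> (nat \<Rightarrow> 'h::finite \<Rightarrow> real) \<Rightarrow> (nat \<Rightarrow> 'm::finite \<Rightarrow> real)
    \<Rightarrow> (nat \<Rightarrow> 'v::finite) \<Rightarrow> nat \<Rightarrow> 'v \<Rightarrow> real" where
  "gr \<gamma> zs zm e t v = onehot (e t) v - softmax (fwd (fst (train \<gamma> zs zm e t)) (snd (train \<gamma> zs zm e t)) (zs t) (zm t)) v"

lemma train_fst:
  "matvec (fst (train \<gamma> zs zm e n)) z v = (\<Sum>t<n. \<gamma> * gr \<gamma> zs zm e t v * dotp (zs t) z)"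
proof (induction n)
  case 0 then show ?case by (simp add: matvec_def)
next
  case (Suc n)
  have "matvec (fst (train \<gamma> zs zm e (Suc n))) z v
     = matvec (fst (train \<gamma> zs zm e n)) z v + \<gamma> * gr \<gamma> zs zm e n v * dotp (zs n) z"
    by (simp add: matvec_def dotp_def gr_def Let_def ring_distribs sum.distrib sum_distrib_left mult.assoc)
  then show ?case using Suc by simp
qed

lemma train_snd:
  "matvec (snd (train \<gamma> zs zm e n)) z v = (\<Sum>t<n. \<gamma> * gr \<gamma> zs zm e t v * dotp (zm t) z)"
proof (induction n)
  case 0 then show ?case by (simp add: matvec_def)
next
  case (Suc n)
  have "matvec (snd (train \<gamma> zs zm e (Suc n))) z v
     = matvec (snd (train \<gamma> zs zm e n)) z v + \<gamma> * gr \<gamma> zs zm e n v * dotp (zm n) z"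
    by (simp add: matvec_def dotp_def gr_def Let_def ring_distribs sum.distrib sum_distrib_left mult.assoc)
  then show ?case using Suc by simp
qed

lemma dotp_comm: "dotp a b = dotp b a"
  by (simp add: dotp_def mult.commute)

theorem theoremG3:
  fixes \<gamma> C p eps_s eps_m :: real
    and N k :: nat
    and R :: "nat set"
    and zs :: "nat \<Rightarrow> 'h::finite \<Rightarrow> real"
    and zm :: "nat \<Rightarrow> 'm::finite \<Rightarrow> real"
    and e :: "nat \<Rightarrow> 'v::finite"
    and zsM :: "'h \<Rightarrow> real" and zmM :: "'m \<Rightarrow> real" and eM :: "'v"
  assumes V2: "CARD('v) \<ge> 2"
    and gamma_pos: "\<gamma> > 0"
    and R_sub: "R \<subseteq> {..<N}" and R_card: "card R = k"
    and rep: "\<And>t. t \<in> R \<Longrightarrow> zs t = zsM \<and> zm t = zmM \<and> e t = eM"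
    and nonrep_target: "\<And>t. t \<in> {..<N} - R \<Longrightarrow> e t \<noteq> eM"
    and norm_s: "sqrt (dotp zsM zsM) = 1"
    and norm_m: "sqrt (dotp zmM zmM) = 1"
    and logits: "\<And>t v. t < N \<Longrightarrow>
       \<bar>fwd (fst (train \<gamma> zs zm e t)) (snd (train \<gamma> zs zm e t)) (zs t) (zm t) v\<bar> \<le> C / 2"
    and eps_s_nonneg: "eps_s \<ge> 0"
    and shared_overlap: "\<And>t. t \<in> {..<N} - R \<Longrightarrow> dotp zsM (zs t) \<ge> eps_s"
    and mem_overlap: "\<And>t. t \<in> {..<N} - R \<Longrightarrow> 0 \<le> dotp zmM (zm t) \<and> dotp zmM (zm t) \<le> eps_m"
    and sparse: "real (card {t \<in> {..<N} - R. dotp zmM (zm t) \<noteq> 0}) \<le> p * real (N - k)"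
  shows "matvec (fst (train \<gamma> zs zm e N)) zsM eM
           \<le> \<gamma> * k * (1 - exp (- C) / CARD('v)) - \<gamma> * real (N - k) * eps_s * (exp (- C) / CARD('v))
       \<and> matvec (snd (train \<gamma> zs zm e N)) zmM eM
           \<ge> \<gamma> * k * (1 - exp C / (CARD('v) - 1)) - \<gamma> * real (N - k) * p * eps_m * (exp C / (CARD('v) - 1))"
proof -
  define c1 :: real where "c1 = exp (- C) / CARD('v)"
  define c2 :: real where "c2 = exp C / (CARD('v) - 1)"
  define s where "s t = softmax (fwd (fst (train \<gamma> zs zm e t)) (snd (train \<gamma> zs zm e t)) (zs t) (zm t)) eM" for t
  define NR where "NR = {..<N} - R"
  have c1pos: "c1 \<ge> 0" unfolding c1_def by simp
  have c2pos: "c2 \<ge> 0" unfolding c2_def using V2 by simp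
  have sb: "c1 \<le> s t \<and> s t \<le> c2" if "t < N" for t
  proof -
    have lb: "\<And>u. \<bar>fwd (fst (train \<gamma> zs zm e t)) (snd (train \<gamma> zs zm e t)) (zs t) (zm t) u\<bar> \<le> C / 2"
      using logits[OF that] by blast
    show ?thesis unfolding c1_def c2_def s_def
      using softmax_lower[where x="fwd (fst (train \<gamma> zs zm e t)) (snd (train \<gamma> zs zm e t)) (zs t) (zm t)" and v=eM, OF lb]
        softmax_upper[where x="fwd (fst (train \<gamma> zs zm e t)) (snd (train \<gamma> zs zm e t)) (zs t) (zm t)" and v=eM, OF lb V2] by blast
  qed
  have finR: "finite R" using R_sub finite_subset by blast
  have cardNR: "card NR = N - k" unfolding NR_def using R_sub R_card by (simp add: card_Diff_subset finR)
  have finNR: "finite NR" unfolding NR_def by simp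
  have split: "{..<N} = R \<union> NR" "R \<inter> NR = {}" unfolding NR_def using R_sub by auto
  have gR: "gr \<gamma> zs zm e t eM = 1 - s t" if "t \<in> R" for t
    using rep[OF that] by (simp add: gr_def s_def onehot_def)
  have gNR: "gr \<gamma> zs zm e t eM = - s t" if "t \<in> NR" for t
    using nonrep_target[of t] that unfolding NR_def by (simp add: gr_def s_def onehot_def)
  have ds: "dotp zsM zsM = 1" using norm_s by simp
  have dm: "dotp zmM zmM = 1" using norm_m by simp
  have tN: "t < N" if "t \<in> R \<or> t \<in> NR" for t using that R_sub unfolding NR_def by auto
  have P1: "matvec (fst (train \<gamma> zs zm e N)) zsM eM
      = (\<Sum>t\<in>R. \<gamma> * gr \<gamma> zs zm e t eM * dotp (zs t) zsM) + (\<Sum>t\<in>NR. \<gamma> * gr \<gamma> zs zm e t eM * dotp (zs t) zsM)"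
    unfolding train_fst split(1) by (rule sum.union_disjoint) (use finR finNR split in auto)
  have P2: "matvec (snd (train \<gamma> zs zm e N)) zmM eM
      = (\<Sum>t\<in>R. \<gamma> * gr \<gamma> zs zm e t eM * dotp (zm t) zmM) + (\<Sum>t\<in>NR. \<gamma> * gr \<gamma> zs zm e t eM * dotp (zm t) zmM)"
    unfolding train_snd split(1) by (rule sum.union_disjoint) (use finR finNR split in auto)
  have A1: "(\<Sum>t\<in>R. \<gamma> * gr \<gamma> zs zm e t eM * dotp (zs t) zsM) \<le> (\<Sum>t\<in>R. \<gamma> * (1 - c1))"
  proof (rule sum_mono)
    fix t assume t: "t \<in> R"
    show "\<gamma> * gr \<gamma> zs zm e t eM * dotp (zs t) zsM \<le> \<gamma> * (1 - c1)"
      using gR[OF t] rep[OF t] ds sb[OF tN] t gamma_pos by simp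
  qed
  have B1: "(\<Sum>t\<in>NR. \<gamma> * gr \<gamma> zs zm e t eM * dotp (zs t) zsM) \<le> (\<Sum>t\<in>NR. - (\<gamma> * eps_s * c1))"
  proof (rule sum_mono)
    fix t assume t: "t \<in> NR"
    have d: "eps_s \<le> dotp (zs t) zsM" using shared_overlap[of t] t dotp_comm unfolding NR_def by metis
    have "c1 * eps_s \<le> s t * dotp (zs t) zsM"
      using sb[of t] tN[of t] t d c1pos eps_s_nonneg by (intro mult_mono) auto
    then show "\<gamma> * gr \<gamma> zs zm e t eM * dotp (zs t) zsM \<le> - (\<gamma> * eps_s * c1)"
      using gNR[OF t] gamma_pos mult_left_mono[of "c1 * eps_s" "s t * dotp (zs t) zsM" \<gamma>]
      by (simp add: algebra_simps)
  qed
  have A2: "(\<Sum>t\<in>R. \<gamma> * gr \<gamma> zs zm e t eM * dotp (zm t) zmM) \<ge> (\<Sum>t\<in>R. \<gamma> * (1 - c2))"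
  proof (rule sum_mono)
    fix t assume t: "t \<in> R"
    show "\<gamma> * gr \<gamma> zs zm e t eM * dotp (zm t) zmM \<ge> \<gamma> * (1 - c2)"
      using gR[OF t] rep[OF t] dm sb[OF tN] t gamma_pos by simp
  qed
  define Z where "Z = {t \<in> NR. dotp zmM (zm t) \<noteq> 0}"
  have B2: "(\<Sum>t\<in>NR. \<gamma> * gr \<gamma> zs zm e t eM * dotp (zm t) zmM)
      \<ge> (\<Sum>t\<in>NR. (if dotp zmM (zm t) \<noteq> 0 then - (\<gamma> * eps_m * c2) else 0))"
  proof (rule sum_mono)
    fix t assume t: "t \<in> NR"
    have d: "0 \<le> dotp (zm t) zmM \<and> dotp (zm t) zmM \<le> eps_m"
      using mem_overlap[of t] t dotp_comm unfolding NR_def by metis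
    have "s t * dotp (zm t) zmM \<le> c2 * eps_m"
      using sb[of t] tN[of t] t d c2pos by (intro mult_mono) auto
    then have "\<gamma> * (s t * dotp (zm t) zmM) \<le> \<gamma> * (c2 * eps_m)"
      using gamma_pos by (intro mult_left_mono) auto
    then show "(if dotp zmM (zm t) \<noteq> 0 then - (\<gamma> * eps_m * c2) else 0) \<le> \<gamma> * gr \<gamma> zs zm e t eM * dotp (zm t) zmM"
      using gNR[OF t] dotp_comm[of zmM "zm t"] by (auto simp: algebra_simps)
  qed
  have B2': "(\<Sum>t\<in>NR. (if dotp zmM (zm t) \<noteq> 0 then - (\<gamma> * eps_m * c2) else 0)) = - (\<gamma> * eps_m * c2) * card Z"
    unfolding Z_def using finNR by (simp add: sum.If_cases Int_def)
  have ZZ: "- (\<gamma> * eps_m * c2) * card Z \<ge> - (\<gamma> * real (N - k) * p * eps_m * c2)"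
  proof (cases "NR = {}")
    case True
    then have "N - k = 0" using cardNR by simp
    moreover have "Z = {}" using True Z_def by simp
    ultimately show ?thesis by simp
  next
    case False
    then obtain t where t: "t \<in> NR" by blast
    have "eps_m \<ge> 0" using mem_overlap[of t] t unfolding NR_def by auto
    then have nn: "\<gamma> * eps_m * c2 \<ge> 0" using gamma_pos c2pos by simp
    have "real (card Z) \<le> p * real (N - k)" using sparse unfolding Z_def NR_def by simp
    from mult_left_mono[OF this nn] show ?thesis by (simp add: algebra_simps)
  qed
  show ?thesis
  proof
    show "matvec (fst (train \<gamma> zs zm e N)) zsM eM
           \<le> \<gamma> * k * (1 - exp (- C) / CARD('v)) - \<gamma> * real (N - k) * eps_s * (exp (- C) / CARD('v))"
      using P1 A1 B1 cardNR R_card unfolding c1_def by (simp add: algebra_simps)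
    show "matvec (snd (train \<gamma> zs zm e N)) zmM eM
           \<ge> \<gamma> * k * (1 - exp C / (CARD('v) - 1)) - \<gamma> * real (N - k) * p * eps_m * (exp C / (CARD('v) - 1))"
      using P2 A2 B2 B2' ZZ cardNR R_card unfolding c2_def by (simp add: algebra_simps)
  qed
qed

end
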